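(* Let $h\ge1$ be an integer and $r$ a real number with $r\ge 36h^3$. Let $\beta$ be a real-valued function on the positive integers such that $\beta(m)=0$ for all $m\le r$, and such that for every integer $m>r$ there exist positive integers $m_1,m_2$ with $m_1,m_2\ge m/3$, $m\le m_1+m_2\le m+h^{3/2}\sqrt m$, and $$\beta(m)\le \beta(m_1)+\beta(m_2)+h^{3/2}\sqrt m.$$ Then for every positive integer $m$, $$\beta(m)\le\begin{cases}\dfrac{10h^{3/2}m}{\sqrt{r/3}}-10h^{3/2}\sqrt m, & \text{if } m\ge r/3,\\[2mm] 0,&\text{otherwise.}\end{cases}$$ *)

theory Defs
  imports Complex_Main
begin

end

theory Submission
  imports Defs
begin

lemma key:
  fixes a b c q :: real
  assumes c: "c > 0" and a: "a \<ge> c/3" and b: "b \<ge> c/3" and ab: "a + b \<ge> c"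
    and q: "q \<ge> 0" "q^2 \<le> 1/12"
  shows "(11/10 + q) * sqrt c \<le> sqrt a + sqrt b"
proof -
  have a0: "a \<ge> 0" "b \<ge> 0" using a b c by auto
  have "(a - c/3) * (b - c/3) \<ge> 0" using a b by simp
  hence e: "a*b \<ge> c*(a+b)/3 - c*c/9" by (simp add: algebra_simps)
  have "c*(a+b) \<ge> c*c" using ab c by (intro mult_left_mono) auto
  hence ab2: "a*b \<ge> 2/9 * c^2" using e by (simp add: power2_eq_square)
  have "(0.47135 * c)^2 \<le> a*b" proof -
    have "c*c \<ge> 0" by simp
    thus ?thesis using ab2 by (simp add: power2_eq_square power_mult_distrib del: mult_nonneg_nonneg zero_le_square)
  qed
  hence s: "0.47135 * c \<le> sqrt (a*b)" by (rule real_le_rsqrt)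
  have q1: "q \<le> 0.2887"
  proof (rule ccontr)
    assume "\<not> ?thesis" hence "q > 0.2887" by simp
    hence "q^2 > 0.2887^2" by (intro power_strict_mono) auto
    thus False using q by (simp add: power2_eq_square)
  qed
  have sq: "(sqrt a + sqrt b)^2 = a + b + 2 * sqrt (a*b)"
    using a0 by (simp add: power2_eq_square algebra_simps real_sqrt_mult)
  have "((11/10 + q) * sqrt c)^2 = (11/10+q)^2 * c" using c by (simp add: power_mult_distrib)
  also have "\<dots> \<le> 1.3887^2 * c" using q q1 c by (intro mult_right_mono power_mono) auto
  also have "\<dots> \<le> (sqrt a + sqrt b)^2" using sq s ab c by (simp add: power2_eq_square)
  finally show ?thesis by (rule power2_le_imp_le) (use a0 in auto)
qed


theorem mainTheorem2:
  fixes h :: nat and r :: real and \<beta> :: "nat \<Rightarrow> real"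
  assumes h: "h \<ge> 1"
    and r: "r \<ge> 36 * real h ^ 3"
    and small: "\<And>m. m \<ge> 1 \<Longrightarrow> real m \<le> r \<Longrightarrow> \<beta> m = 0"
    and rec: "\<And>m. m \<ge> 1 \<Longrightarrow> real m > r \<Longrightarrow>
      \<exists>m1 m2. m1 \<ge> 1 \<and> m2 \<ge> 1 \<and> real m1 \<ge> real m / 3 \<and> real m2 \<ge> real m / 3 \<and>
        m \<le> m1 + m2 \<and> real (m1 + m2) \<le> real m + real h powr (3/2) * sqrt (real m) \<and>
        \<beta> m \<le> \<beta> m1 + \<beta> m2 + real h powr (3/2) * sqrt (real m)"
  shows "\<And>m. m \<ge> 1 \<Longrightarrow> \<beta> m \<le>
      (if real m \<ge> r / 3
       then 10 * real h powr (3/2) * real m / sqrt (r / 3) - 10 * real h powr (3/2) * sqrt (real m)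
       else 0)"
  proof -
  define H where "H = real h powr (3/2)"
  define s where "s = sqrt (r/3)"
  have hpos: "real h \<ge> 1" using h by simp
  have H0: "H > 0" unfolding H_def using hpos by simp
  have H2: "H^2 = real h ^ 3"
  proof -
    have "H^2 = real h powr (of_nat 2 * (3/2))" unfolding H_def using hpos by (subst powr_power) auto
    also have "\<dots> = real h powr (real 3)" by simp
    also have "\<dots> = real h ^ 3" using hpos by (subst powr_realpow) auto
    finally show ?thesis .
  qed
  have h3: "real h ^ 3 \<ge> 1" using hpos by simp
  have rpos: "r > 0" using r h3 by linarith
  have s0: "s > 0" unfolding s_def using rpos by simp
  have s2: "s^2 = r/3" unfolding s_def using rpos by simp
  define q where "q = H / s"
  have q0: "q \<ge> 0" unfolding q_def using H0 s0 by simp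
  have q2: "q^2 \<le> 1/12"
  proof -
    have "q^2 = real h ^ 3 / (r/3)" unfolding q_def power_divide H2 s2 ..
    also have "\<dots> \<le> 1/12" using r rpos by (simp add: field_simps)
    finally show ?thesis .
  qed
  define G where "G m = (if real m \<ge> r / 3
       then 10 * H * real m / s - 10 * H * sqrt (real m) else 0)" for m :: nat
  have Gnn: "G m \<ge> 0" for m
  proof (cases "real m \<ge> r/3")
    case True
    hence "sqrt (real m) \<ge> s" unfolding s_def by simp
    hence "s * sqrt (real m) \<le> sqrt (real m) * sqrt (real m)" by (intro mult_right_mono) auto
    hence "s * sqrt (real m) \<le> real m" by simp
    hence "real m / s \<ge> sqrt (real m)" using s0 by (simp add: field_simps)
    hence "10 * H * (real m / s) \<ge> 10 * H * sqrt (real m)" using H0 by (intro mult_left_mono) auto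
    thus ?thesis using True unfolding G_def by (simp add: times_divide_eq_right)
  qed (simp add: G_def)
  have main: "m \<ge> 1 \<Longrightarrow> \<beta> m \<le> G m" for m
  proof (induction m rule: less_induct)
    case (less m)
    show ?case
    proof (cases "real m \<le> r")
      case True thus ?thesis using small[OF less.prems] Gnn[of m] by simp
    next
      case False
      hence mr: "real m > r" by simp
      obtain m1 m2 where m1: "m1 \<ge> 1" and m2: "m2 \<ge> 1" and m13: "real m1 \<ge> real m / 3"
        and m23: "real m2 \<ge> real m / 3" and sum1: "m \<le> m1 + m2"
        and sum2: "real (m1 + m2) \<le> real m + H * sqrt (real m)"
        and bm: "\<beta> m \<le> \<beta> m1 + \<beta> m2 + H * sqrt (real m)"
        using rec[OF less.prems mr] unfolding H_def by blast
      have "(3*H)^2 < real m" using H2 r mr h3 by (simp add: power_mult_distrib)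
      hence "3*H < sqrt (real m)" by (rule real_less_rsqrt)
      moreover have "sqrt (real m) > 0" using mr rpos by simp
      ultimately have "3*H * sqrt (real m) < sqrt (real m) * sqrt (real m)"
        by (intro mult_strict_right_mono) auto
      hence Hm: "H * sqrt (real m) < real m / 3" using mr rpos by simp
      have lt1: "m1 < m" using sum2 m23 Hm by simp
      have lt2: "m2 < m" using sum2 m13 Hm by simp
      have G1: "G m1 = 10 * H * real m1 / s - 10 * H * sqrt (real m1)"
        using m13 mr unfolding G_def by simp
      have G2: "G m2 = 10 * H * real m2 / s - 10 * H * sqrt (real m2)"
        using m23 mr unfolding G_def by simp
      have Gm: "G m = 10 * H * real m / s - 10 * H * sqrt (real m)"
        using mr rpos unfolding G_def by simp
      have b1: "\<beta> m1 \<le> G m1" using less.IH[OF lt1 m1] .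
      have b2: "\<beta> m2 \<le> G m2" using less.IH[OF lt2 m2] .
      have k: "(11/10 + q) * sqrt (real m) \<le> sqrt (real m1) + sqrt (real m2)"
        using key[of "real m" "real m1" "real m2" q] mr rpos m13 m23 sum1 q0 q2 by simp
      hence "10*H*((11/10 + q) * sqrt (real m)) \<le> 10*H*(sqrt (real m1) + sqrt (real m2))"
        using H0 by (intro mult_left_mono) auto
      hence k': "10*H*q*sqrt (real m) + 11*H*sqrt (real m) \<le> 10*H*sqrt (real m1) + 10*H*sqrt (real m2)"
        by (simp add: distrib_left distrib_right mult.assoc)
      have "10*H*(real m1 + real m2)/s \<le> 10*H*(real m + H * sqrt (real m))/s"
        using sum2 H0 s0 by (intro divide_right_mono mult_left_mono) auto
      also have "\<dots> = 10*H*real m/s + 10*H*q*sqrt (real m)" unfolding q_def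
        by (simp add: distrib_left add_divide_distrib)
      finally have k2: "10*H*(real m1 + real m2)/s \<le> 10*H*real m/s + 10*H*q*sqrt (real m)" .
      have "10*H*(real m1 + real m2)/s = 10 * H * real m1 / s + 10 * H * real m2 / s"
        by (simp add: distrib_left add_divide_distrib)
      with k2 k' bm b1 b2 G1 G2 Gm show ?thesis by linarith
    qed
  qed
  fix m :: nat assume "m \<ge> 1"
  from main[OF this] show "\<beta> m \<le> (if real m \<ge> r / 3
       then 10 * real h powr (3/2) * real m / sqrt (r / 3) - 10 * real h powr (3/2) * sqrt (real m)
       else 0)" unfolding G_def H_def s_def .
qed

end
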